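(* Let $\phi:M_2\to M_2$ be a linear map with $\sigma_{\mathcal{K}}(\phi(A))=\sigma_{\mathcal{K}}(A)$ for all $A\in M_2$. Then $\phi(E_{11}+E_{21})$ is singular.
   Context: $M_2$ is the space of real $2\times2$ matrices and $E_{ij}$ is the matrix with $1$ in position $(i,j)$ and $0$ elsewhere. Lorentz cone $\mathcal{K}=\{(x_1,x_2)^T:|x_1|\le x_2\}$; a real $\lambda$ is an L-eigenvalue of $A$ if there is a nonzero $x\in\mathcal{K}$ with $(A-\lambda I)x\in\mathcal{K}$ and $x^T(A-\lambda I)x=0$; $\sigma_{\mathcal{K}}(A)$ is the set of L-eigenvalues. *)

theory Defs
  imports "HOL-Analysis.Analysis"
begin

definition lorentz_cone :: "(real ^ 2) set" where
  "lorentz_cone = {x. \<bar>x $ 1\<bar> \<le> x $ 2}"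

definition L_eigenvalue :: "real ^ 2 ^ 2 \<Rightarrow> real \<Rightarrow> bool" where
  "L_eigenvalue A l \<longleftrightarrow>
     (\<exists>x. x \<noteq> 0 \<and> x \<in> lorentz_cone \<and>
          (A - l *\<^sub>R mat 1) *v x \<in> lorentz_cone \<and>
          x \<bullet> ((A - l *\<^sub>R mat 1) *v x) = 0)"

definition L_spectrum :: "real ^ 2 ^ 2 \<Rightarrow> real set" where
  "L_spectrum A = {l. L_eigenvalue A l}"

definition Emat :: "2 \<Rightarrow> 2 \<Rightarrow> real ^ 2 ^ 2" where
  "Emat i j = (\<chi> k l. if k = i \<and> l = j then 1 else 0)"

end

theory Submission
  imports Defs
begin

lemma vec2_nz: "(x::real^2) \<noteq> 0 \<longleftrightarrow> x$1 \<noteq> 0 \<or> x$2 \<noteq> 0"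
  by (auto simp: vec_eq_iff forall_2)

lemma Leig_char:
  "L_eigenvalue M l \<longleftrightarrow> (\<exists>x1 x2::real. (x1 \<noteq> 0 \<or> x2 \<noteq> 0) \<and> \<bar>x1\<bar> \<le> x2 \<and>
     \<bar>(M$1$1 - l) * x1 + M$1$2 * x2\<bar> \<le> M$2$1 * x1 + (M$2$2 - l) * x2 \<and>
     x1 * ((M$1$1 - l) * x1 + M$1$2 * x2) + x2 * (M$2$1 * x1 + (M$2$2 - l) * x2) = 0)" (is "?L = ?R")
proof -
  have comp: "((M - l *\<^sub>R mat 1) *v x) $ 1 = (M$1$1 - l) * x$1 + M$1$2 * x$2"
     "((M - l *\<^sub>R mat 1) *v x) $ 2 = M$2$1 * x$1 + (M$2$2 - l) * x$2" for x :: "real^2"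
    by (simp_all add: matrix_vector_mult_def sum_2 mat_def algebra_simps)
  have inn: "x \<bullet> y = x$1 * y$1 + x$2 * y$2" for x y :: "real^2"
    by (simp add: inner_vec_def sum_2)
  show ?thesis
  proof
    assume "L_eigenvalue M l"
    then obtain x where "x \<noteq> 0" "x \<in> lorentz_cone" "(M - l *\<^sub>R mat 1) *v x \<in> lorentz_cone"
      "x \<bullet> ((M - l *\<^sub>R mat 1) *v x) = 0" unfolding L_eigenvalue_def by blast
    then show ?R unfolding lorentz_cone_def
      by (intro exI[of _ "x$1"] exI[of _ "x$2"]) (simp add: comp inn vec2_nz)
  next
    assume "\<exists>x1 x2::real. (x1 \<noteq> 0 \<or> x2 \<noteq> 0) \<and> \<bar>x1\<bar> \<le> x2 \<and>
     \<bar>(M$1$1 - l) * x1 + M$1$2 * x2\<bar> \<le> M$2$1 * x1 + (M$2$2 - l) * x2 \<and>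
     x1 * ((M$1$1 - l) * x1 + M$1$2 * x2) + x2 * (M$2$1 * x1 + (M$2$2 - l) * x2) = 0"
    then obtain x1 x2 where h: "(x1 \<noteq> 0 \<or> x2 \<noteq> 0) \<and> \<bar>x1\<bar> \<le> x2 \<and>
     \<bar>(M$1$1 - l) * x1 + M$1$2 * x2\<bar> \<le> M$2$1 * x1 + (M$2$2 - l) * x2 \<and>
     x1 * ((M$1$1 - l) * x1 + M$1$2 * x2) + x2 * (M$2$1 * x1 + (M$2$2 - l) * x2) = 0" by blast
    define x :: "real^2" where "x = vector [x1, x2]"
    have "x$1 = x1" "x$2 = x2" by (simp_all add: x_def)
    then show "L_eigenvalue M l" unfolding L_eigenvalue_def lorentz_cone_def
      using h by (intro exI[of _ x]) (simp add: comp inn vec2_nz)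
  qed
qed

lemma zero_case:
  fixes x1 x2 y1 y2 :: real
  assumes "x1 \<noteq> 0 \<or> x2 \<noteq> 0" "\<bar>x1\<bar> \<le> x2" "\<bar>y1\<bar> \<le> y2" "x1*y1 + x2*y2 = 0"
    and "y1 \<noteq> 0 \<or> y2 \<noteq> 0"
  shows "(x1 = x2 \<and> y1 = - y2 \<and> x2 > 0 \<and> y2 > 0) \<or> (x1 = - x2 \<and> y1 = y2 \<and> x2 > 0 \<and> y2 > 0)"
proof -
  have x2: "x2 > 0" using assms(1,2) by linarith
  have y2: "y2 > 0" using assms(3,5) by linarith
  have a: "\<bar>x1\<bar> * \<bar>y1\<bar> \<le> x2 * y2" using assms(2,3) by (simp add: mult_mono)
  have b: "x2 * y2 = - (x1*y1)" using assms(4) by linarith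
  have c: "- (x1*y1) \<le> \<bar>x1\<bar> * \<bar>y1\<bar>" by (simp add: abs_mult[symmetric])
  have e: "\<bar>x1\<bar> * \<bar>y1\<bar> = x2 * y2" using a b c by linarith
  have f1: "\<bar>x1\<bar> = x2"
  proof (rule ccontr)
    assume "\<bar>x1\<bar> \<noteq> x2" then have lt: "\<bar>x1\<bar> < x2" using assms(2) by linarith
    have "\<bar>x1\<bar> * \<bar>y1\<bar> \<le> \<bar>x1\<bar> * y2" by (rule mult_left_mono[OF assms(3) abs_ge_zero])
    also have "\<dots> < x2 * y2" by (rule mult_strict_right_mono[OF lt y2])
    finally show False using e by linarith
  qed
  have f2: "\<bar>y1\<bar> = y2"
  proof (rule ccontr)
    assume "\<bar>y1\<bar> \<noteq> y2" then have "\<bar>y1\<bar> < y2" using assms(3) by linarith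
    then have "\<bar>x1\<bar> * \<bar>y1\<bar> < x2 * y2"
      using x2 f1 by (metis mult_strict_left_mono)
    then show False using e by linarith
  qed
  have neg: "x1 * y1 < 0" using b x2 y2 by (smt (verit) mult_pos_pos)
  show ?thesis
  proof (cases "x1 \<ge> 0")
    case True
    then have "x1 = x2" using f1 by linarith
    then have "y1 < 0" using neg x2 by (smt (verit) mult_nonneg_nonneg)
    then show ?thesis using f2 x2 y2 \<open>x1 = x2\<close> by linarith
  next
    case False
    then have "x1 = - x2" using f1 by linarith
    then have "y1 > 0" using neg x2 by (smt (verit) mult_nonpos_nonpos mult_minus_left)
    then show ?thesis using f2 x2 y2 \<open>x1 = - x2\<close> by linarith
  qed
qed

theorem lemma4p2:
  fixes \<phi> :: "real ^ 2 ^ 2 \<Rightarrow> real ^ 2 ^ 2"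
  assumes "linear \<phi>"
    and "\<And>A. L_spectrum (\<phi> A) = L_spectrum A"
  shows "\<not> invertible (\<phi> (Emat 1 1 + Emat 2 1))"
proof
  define A where "A = Emat 1 1 + Emat 2 1"
  define B where "B = \<phi> A"
  assume inv: "invertible (\<phi> (Emat 1 1 + Emat 2 1))"
  then have det: "B$1$1 * B$2$2 - B$1$2 * B$2$1 \<noteq> 0"
    by (simp add: B_def A_def invertible_det_nz det_2)
  have Aent: "A$1$1 = 1" "A$1$2 = 0" "A$2$1 = 1" "A$2$2 = 0"
    by (simp_all add: A_def Emat_def)
  have mB: "\<phi> (-A) = - B" using assms(1) by (simp add: B_def linear_neg)
  have sp: "L_eigenvalue (\<phi> X) l \<longleftrightarrow> L_eigenvalue X l" for X l
    using assms(2)[of X] by (auto simp: L_spectrum_def)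
  have A0: "L_eigenvalue A 0" unfolding Leig_char
    by (rule exI[of _ 0], rule exI[of _ 1]) (simp add: Aent)
  have A1: "L_eigenvalue A 1" unfolding Leig_char
    by (rule exI[of _ 1], rule exI[of _ 1]) (simp add: Aent)
  have mA0: "L_eigenvalue (-A) 0" unfolding Leig_char
    by (rule exI[of _ 0], rule exI[of _ 1]) (simp add: Aent)
  have B0: "L_eigenvalue B 0" using A0 sp B_def by simp
  have B1: "L_eigenvalue B 1" using A1 sp B_def by simp
  have mB0: "L_eigenvalue (-B) 0" using mA0 sp[of "-A"] mB by simp
  obtain a b c d where abcd: "B$1$1 = a" "B$1$2 = b" "B$2$1 = c" "B$2$2 = d" by blast
  have nz: "a * x1 + b * x2 \<noteq> 0 \<or> c * x1 + d * x2 \<noteq> 0" if "x1 \<noteq> 0 \<or> x2 \<noteq> 0" for x1 x2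
  proof (rule ccontr)
    assume "\<not> ?thesis"
    then have "a * x1 + b * x2 = 0" "c * x1 + d * x2 = 0" by auto
    moreover have "(a*d - b*c) * x1 = d * (a * x1 + b * x2) - b * (c * x1 + d * x2)"
      "(a*d - b*c) * x2 = a * (c * x1 + d * x2) - c * (a * x1 + b * x2)"
      by (simp_all add: algebra_simps)
    ultimately have "(a*d - b*c) * x1 = 0" "(a*d - b*c) * x2 = 0" by simp_all
    then show False using that det abcd by auto
  qed
  have B0': "\<exists>x1 x2. (x1 \<noteq> 0 \<or> x2 \<noteq> 0) \<and> \<bar>x1\<bar> \<le> x2 \<and>
     \<bar>a * x1 + b * x2\<bar> \<le> c * x1 + d * x2 \<and> x1 * (a * x1 + b * x2) + x2 * (c * x1 + d * x2) = 0"
    using B0 unfolding Leig_char abcd by simp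
  have mB0': "\<exists>z1 z2. (z1 \<noteq> 0 \<or> z2 \<noteq> 0) \<and> \<bar>z1\<bar> \<le> z2 \<and>
     \<bar>-a * z1 + -b * z2\<bar> \<le> -c * z1 + -d * z2 \<and> z1 * (-a * z1 + -b * z2) + z2 * (-c * z1 + -d * z2) = 0"
    using mB0 unfolding Leig_char by (simp add: abcd)
  have B1': "\<exists>w1 w2. (w1 \<noteq> 0 \<or> w2 \<noteq> 0) \<and> \<bar>w1\<bar> \<le> w2 \<and>
     \<bar>(a - 1) * w1 + b * w2\<bar> \<le> c * w1 + (d - 1) * w2"
    using B1 unfolding Leig_char abcd by blast
  from B0' obtain x1 x2 where hx: "x1 \<noteq> 0 \<or> x2 \<noteq> 0" "\<bar>x1\<bar> \<le> x2"
     "\<bar>a * x1 + b * x2\<bar> \<le> c * x1 + d * x2" "x1 * (a * x1 + b * x2) + x2 * (c * x1 + d * x2) = 0"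
    by blast
  from mB0' obtain z1 z2 where hz: "z1 \<noteq> 0 \<or> z2 \<noteq> 0" "\<bar>z1\<bar> \<le> z2"
     "\<bar>-a * z1 + -b * z2\<bar> \<le> -c * z1 + -d * z2" "z1 * (-a * z1 + -b * z2) + z2 * (-c * z1 + -d * z2) = 0"
    by blast
  from B1' obtain w1 w2 where hw: "w1 \<noteq> 0 \<or> w2 \<noteq> 0" "\<bar>w1\<bar> \<le> w2"
     "\<bar>(a - 1) * w1 + b * w2\<bar> \<le> c * w1 + (d - 1) * w2"
    by blast
  have X: "(x1 = x2 \<and> a * x1 + b * x2 = - (c * x1 + d * x2) \<and> x2 > 0 \<and> c * x1 + d * x2 > 0) \<or>
     (x1 = - x2 \<and> a * x1 + b * x2 = c * x1 + d * x2 \<and> x2 > 0 \<and> c * x1 + d * x2 > 0)"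
    using zero_case[OF hx(1,2,3,4) nz[OF hx(1)]] .
  have nz2: "-a * z1 + -b * z2 \<noteq> 0 \<or> -c * z1 + -d * z2 \<noteq> 0" using nz[OF hz(1)] by auto
  have Z: "(z1 = z2 \<and> -a * z1 + -b * z2 = - (-c * z1 + -d * z2) \<and> z2 > 0 \<and> -c * z1 + -d * z2 > 0) \<or>
     (z1 = - z2 \<and> -a * z1 + -b * z2 = -c * z1 + -d * z2 \<and> z2 > 0 \<and> -c * z1 + -d * z2 > 0)"
    using zero_case[OF hz(1,2,3,4) nz2] .
  have X': "(a + b = - (c + d) \<and> c + d > 0) \<or> (b - a = d - c \<and> d - c > 0)"
  proof (cases "x1 = x2")
    case True
    with X have "(a + b) * x2 = - ((c + d) * x2)" "(c + d) * x2 > 0" "x2 > 0"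
      by (auto simp: algebra_simps)
    then show ?thesis by (smt (verit) mult_cancel_right zero_less_mult_pos2 mult_minus_left)
  next
    case False
    with X have "(b - a) * x2 = (d - c) * x2" "(d - c) * x2 > 0" "x2 > 0"
      by (auto simp: algebra_simps)
    then show ?thesis by (smt (verit) mult_cancel_right zero_less_mult_pos2)
  qed
  have Z': "(a + b = - (c + d) \<and> c + d < 0) \<or> (b - a = d - c \<and> d - c < 0)"
  proof (cases "z1 = z2")
    case True
    with Z have "(a + b) * z2 = - ((c + d) * z2)" "- ((c + d) * z2) > 0" "z2 > 0"
      by (auto simp: algebra_simps)
    then show ?thesis by (smt (verit) mult_cancel_right zero_less_mult_pos2 mult_minus_left)
  next
    case False
    with Z have "(b - a) * z2 = (d - c) * z2" "- ((d - c) * z2) > 0" "z2 > 0"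
      by (auto simp: algebra_simps)
    then show ?thesis by (smt (verit) mult_cancel_right zero_less_mult_pos2 mult_minus_left)
  qed
  have wa: "w1 + w2 \<ge> 0" "w2 - w1 \<ge> 0" using hw(2) by linarith+
  have yy1: "((a - 1) * w1 + b * w2) + (c * w1 + (d - 1) * w2) = (a + c - 1) * w1 + (b + d - 1) * w2"
    by (simp add: algebra_simps)
  have yy2: "(c * w1 + (d - 1) * w2) - ((a - 1) * w1 + b * w2) = (c - a + 1) * w1 + (d - b - 1) * w2"
    by (simp add: algebra_simps)
  have ws: "w1 + w2 = 0 \<and> w2 - w1 = 0"
  proof (cases "c + d > 0")
    case True
    then have r: "a + b = - (c + d)" "b - a = d - c" "d - c < 0" using X' Z' by linarith+
    have e1: "a + c - 1 = (c - d) - 1" and e2: "b + d - 1 = - (c - d) - 1" using r by linarith+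
    have "((a - 1) * w1 + b * w2) + (c * w1 + (d - 1) * w2) = ((c - d) - 1) * w1 + (- (c - d) - 1) * w2"
      using yy1[unfolded e1 e2] .
    also have "\<dots> = - (w1 + w2) - (c - d) * (w2 - w1)" by (simp add: algebra_simps)
    finally have "((a - 1) * w1 + b * w2) + (c * w1 + (d - 1) * w2) = - (w1 + w2) - (c - d) * (w2 - w1)" .
    moreover have "(c - d) * (w2 - w1) \<ge> 0" using r wa by simp
    moreover have "((a - 1) * w1 + b * w2) + (c * w1 + (d - 1) * w2) \<ge> 0" using hw(3) by linarith
    ultimately have "w1 + w2 = 0" "(c - d) * (w2 - w1) = 0" using wa by linarith+
    then show ?thesis using r by simp
  next
    case False
    then have r: "a + b = - (c + d)" "b - a = d - c" "d - c > 0" "c + d < 0" using X' Z' by linarith+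
    have e1: "c - a + 1 = (c + d) + 1" and e2: "d - b - 1 = (c + d) - 1" using r by linarith+
    have "(c * w1 + (d - 1) * w2) - ((a - 1) * w1 + b * w2) = ((c + d) + 1) * w1 + ((c + d) - 1) * w2"
      using yy2[unfolded e1 e2] .
    also have "\<dots> = (c + d) * (w1 + w2) - (w2 - w1)" by (simp add: algebra_simps)
    finally have "(c * w1 + (d - 1) * w2) - ((a - 1) * w1 + b * w2) = (c + d) * (w1 + w2) - (w2 - w1)" .
    moreover have "(c + d) * (w1 + w2) \<le> 0" using r wa by (simp add: mult_nonpos_nonneg)
    moreover have "(c * w1 + (d - 1) * w2) - ((a - 1) * w1 + b * w2) \<ge> 0" using hw(3) by linarith
    ultimately have "w2 - w1 = 0" "(c + d) * (w1 + w2) = 0" using wa by linarith+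
    then show ?thesis using r by simp
  qed
  then show False using hw(1) by linarith
qed

end
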